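(* Let $N=\langle V,\mathsf{cp},\mathsf{i},\mathsf{ci},\mathsf{cpt},\mathsf{cit}\rangle$ be a conditionally acyclic TCP-net with $V\neq\emptyset$. Then there is a variable $X\in V$ such that for every $Y\in V\setminus\{X\}$: $(Y,X)\notin\mathsf{cp}$, $(Y,X)\notin\mathsf{i}$, and $\{X,Y\}\notin\mathsf{ci}$.
   Context: Variables $V$ have finite nonempty domains $D(X)$; $D(U)$ denotes the set of assignments to $U\subseteq V$. A TCP-net is a tuple $N=\langle V,\mathsf{cp},\mathsf{i},\mathsf{ci},\mathsf{cpt},\mathsf{cit}\rangle$ where: $\mathsf{cp}$ is a set of directed cp-arcs $(X,Y)$ between distinct variables, with $Pa(X)=\{X' : (X',X)\in\mathsf{cp}\}$; $\mathsf{i}$ is a set of directed i-arcs $(X,Y)$ between distinct variables; $\mathsf{ci}$ is a set of undirected ci-arcs $\{X,Y\}$ between distinct variables, each with a nonempty selector set $S(X,Y)\subseteq V\setminus\{X,Y\}$; $\mathsf{cpt}$ assigns to each variable $X$ a table $CPT(X)$ mapping each assignment to $Pa(X)$ to a strict partial order on $D(X)$; $\mathsf{cit}$ assigns to each ci-arc $\gamma=\{X,Y\}$ a table $CIT(\gamma)$, a possibly partial map from $D(S(X,Y))$ to $\{X\rhd Y,\ Y\rhd X\}$. The dependency graph $N^\star$ has vertex set $V$, the cp-arcs and i-arcs as directed edges, the ci-arcs as undirected edges, and additionally, for every ci-arc $\{X_i,X_j\}$ and every $X_k\in S(X_i,X_j)$, the directed edges $(X_k,X_i)$ and $(X_k,X_j)$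 (if not already present). Let $S(N)$ be the union of all selector sets. For $w\in D(S(N))$, the $w$-directed graph of $N^\star$ consists of the vertices and directed edges of $N^\star$ together with, for every ci-arc $\{X_i,X_j\}$ whose CIT maps the restriction of $w$ to $S(X_i,X_j)$ to $X_i\rhd X_j$, a directed edge $(X_i,X_j)$ (if not already present). $N$ is conditionally acyclic iff for every $w\in D(S(N))$ the $w$-directed graph of $N^\star$ is acyclic. *)

theory Defs
  imports "HOL-Library.FuncSet"
begin

text \<open>An assignment to U is an extensional function in PiE U D.
 cp, i: directed arcs (pairs); ci: undirected arcs as two-element sets;
 S: selector set of a ci-arc; cpt X u: strict partial order on D X for u in D(Pa X);
 cit g w: None (undefined), or Some (X,Y) meaning X is more important than Y.\<close>

definition Pa :: "('v \<times> 'v) set \<Rightarrow> 'v \<Rightarrow> 'v set" where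
  "Pa cp X = {X'. (X', X) \<in> cp}"

definition strict_po_on :: "'d set \<Rightarrow> ('d \<times> 'd) set \<Rightarrow> bool" where
  "strict_po_on A r \<longleftrightarrow> r \<subseteq> A \<times> A \<and> irrefl r \<and> trans r"

definition tcp_net ::
  "'v set \<Rightarrow> ('v \<Rightarrow> 'd set) \<Rightarrow> ('v \<times> 'v) set \<Rightarrow> ('v \<times> 'v) set \<Rightarrow> 'v set set
   \<Rightarrow> ('v set \<Rightarrow> 'v set) \<Rightarrow> ('v \<Rightarrow> ('v \<Rightarrow> 'd) \<Rightarrow> ('d \<times> 'd) set)
   \<Rightarrow> ('v set \<Rightarrow> ('v \<Rightarrow> 'd) \<Rightarrow> ('v \<times> 'v) option) \<Rightarrow> bool" where
  "tcp_net V D cp i ci S cpt cit \<longleftrightarrow>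
     finite V \<and>
     (\<forall>X\<in>V. finite (D X) \<and> D X \<noteq> {}) \<and>
     (\<forall>(X,Y)\<in>cp. X \<in> V \<and> Y \<in> V \<and> X \<noteq> Y) \<and>
     (\<forall>(X,Y)\<in>i. X \<in> V \<and> Y \<in> V \<and> X \<noteq> Y) \<and>
     (\<forall>g\<in>ci. \<exists>X Y. g = {X, Y} \<and> X \<in> V \<and> Y \<in> V \<and> X \<noteq> Y) \<and>
     (\<forall>g\<in>ci. S g \<noteq> {} \<and> S g \<subseteq> V - g) \<and>
     (\<forall>X\<in>V. \<forall>u\<in>PiE (Pa cp X) D. strict_po_on (D X) (cpt X u)) \<and>
     (\<forall>g\<in>ci. \<forall>w\<in>PiE (S g) D.
        cit g w = None \<or> (\<exists>X Y. g = {X, Y} \<and> cit g w = Some (X, Y)))"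

definition S_N :: "'v set set \<Rightarrow> ('v set \<Rightarrow> 'v set) \<Rightarrow> 'v set" where
  "S_N ci S = (\<Union>g\<in>ci. S g)"

definition w_directed_edges ::
  "('v \<times> 'v) set \<Rightarrow> ('v \<times> 'v) set \<Rightarrow> 'v set set \<Rightarrow> ('v set \<Rightarrow> 'v set)
   \<Rightarrow> ('v set \<Rightarrow> ('v \<Rightarrow> 'd) \<Rightarrow> ('v \<times> 'v) option) \<Rightarrow> ('v \<Rightarrow> 'd) \<Rightarrow> ('v \<times> 'v) set" where
  "w_directed_edges cp i ci S cit w =
     cp \<union> i
     \<union> {(Xk, Xi). \<exists>g\<in>ci. Xi \<in> g \<and> Xk \<in> S g}
     \<union> {(Xi, Xj). {Xi, Xj} \<in> ci \<and> cit {Xi, Xj} (restrict w (S {Xi, Xj})) = Some (Xi, Xj)}"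

definition conditionally_acyclic ::
  "('v \<Rightarrow> 'd set) \<Rightarrow> ('v \<times> 'v) set \<Rightarrow> ('v \<times> 'v) set \<Rightarrow> 'v set set \<Rightarrow> ('v set \<Rightarrow> 'v set)
   \<Rightarrow> ('v set \<Rightarrow> ('v \<Rightarrow> 'd) \<Rightarrow> ('v \<times> 'v) option) \<Rightarrow> bool" where
  "conditionally_acyclic D cp i ci S cit \<longleftrightarrow>
     (\<forall>w\<in>PiE (S_N ci S) D. acyclic (w_directed_edges cp i ci S cit w))"

end

theory Submission
  imports Defs
begin

theorem lemma3:
  assumes "tcp_net V D cp i ci S cpt cit"
    and "conditionally_acyclic D cp i ci S cit"
    and "V \<noteq> {}"
  shows "\<exists>X\<in>V. \<forall>Y\<in>V - {X}. (Y, X) \<notin> cp \<and> (Y, X) \<notin> i \<and> {X, Y} \<notin> ci"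
proof -
  note tcp = assms(1)[unfolded tcp_net_def]
  have fin: "finite V" using tcp by (rule conjunct1)
  have "\<forall>X\<in>V. finite (D X) \<and> D X \<noteq> {}" using tcp[THEN conjunct2] by (rule conjunct1)
  hence dne: "\<forall>X\<in>V. D X \<noteq> {}" by blast
  have sel: "\<forall>g\<in>ci. S g \<noteq> {} \<and> S g \<subseteq> V - g"
    using tcp[THEN conjunct2, THEN conjunct2, THEN conjunct2, THEN conjunct2, THEN conjunct2] by (rule conjunct1)
  have "S_N ci S \<subseteq> V" using sel unfolding S_N_def by blast
  hence "PiE (S_N ci S) D \<noteq> {}" using dne by (simp add: PiE_eq_empty_iff) blast
  then obtain w where w: "w \<in> PiE (S_N ci S) D" by blast
  define E where "E = w_directed_edges cp i ci S cit w"
  have ac: "acyclic E" using assms(2) w unfolding conditionally_acyclic_def E_def by blast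
  define E' where "E' = E \<inter> V \<times> V"
  have "acyclic E'" using ac acyclic_subset unfolding E'_def by blast
  moreover have "finite E'" using fin unfolding E'_def by (simp add: finite_subset)
  ultimately have "wf E'" by (simp add: finite_acyclic_wf)
  obtain x0 where "x0 \<in> V" using assms(3) by blast
  then obtain X where X: "X \<in> V" "\<forall>y. (y, X) \<in> E' \<longrightarrow> y \<notin> V"
    using wfE_min[OF \<open>wf E'\<close>] by metis
  have "\<forall>Y\<in>V - {X}. (Y, X) \<notin> cp \<and> (Y, X) \<notin> i \<and> {X, Y} \<notin> ci"
  proof (intro ballI conjI)
    fix Y assume Y: "Y \<in> V - {X}"
    show "(Y, X) \<notin> cp" using X Y unfolding E'_def E_def w_directed_edges_def by (meson DiffD1 IntI SigmaI UnCI)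
    show "(Y, X) \<notin> i" using X Y unfolding E'_def E_def w_directed_edges_def by (meson DiffD1 IntI SigmaI UnCI)
    show "{X, Y} \<notin> ci"
    proof
      assume g: "{X, Y} \<in> ci"
      then obtain Z where Z: "Z \<in> S {X, Y}" using sel by blast
      hence "Z \<in> V" using sel g by blast
      moreover have "(Z, X) \<in> {(Xk, Xi). \<exists>g\<in>ci. Xi \<in> g \<and> Xk \<in> S g}" using g Z by blast
      hence "(Z, X) \<in> E" unfolding E_def w_directed_edges_def by (rule UnI1[OF UnI2])
      ultimately show False using X unfolding E'_def by blast
    qed
  qed
  thus ?thesis using X by blast
qed

end
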